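(* Let $k\ge 2$ and $n>2k$ be integers, $X=\{1,\dots,n\}$, $x\in X$, $\mathcal S_x=\left\{S\in\binom{X}{k}\colon x\in S\right\}$ and $\mathcal A=\left\{A\in\binom{X}{k}\colon |A\cap\{1,2,3\}|\ge 2\right\}$. Then $$|\mathcal I(\mathcal S_x)|<\tfrac23\,|\mathcal I(\mathcal A)|.$$
   Context: $\binom{X}{k}$ denotes the family of all $k$-element subsets of $X$. For a family $\mathcal F$, $\mathcal I(\mathcal F):=\{F\cap F'\colon F,F'\in\mathcal F,\ F\neq F'\}$. *)

theory Defs
  imports Complex_Main
begin

definition k_subsets :: "'a set \<Rightarrow> nat \<Rightarrow> 'a set set" where
  "k_subsets X k = {S. S \<subseteq> X \<and> card S = k}"

definition intersections :: "'a set set \<Rightarrow> 'a set set" where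
  "intersections F = {F1 \<inter> F2 | F1 F2. F1 \<in> F \<and> F2 \<in> F \<and> F1 \<noteq> F2}"

end

theory Submission
  imports Defs
begin

lemma two_subsets:
  assumes "finite Z" "2*r \<le> card Z"
  shows "\<exists>B C. B \<subseteq> Z \<and> C \<subseteq> Z \<and> B \<inter> C = {} \<and> card B = r \<and> card C = r"
proof -
  obtain B where B: "B \<subseteq> Z" "card B = r" using obtain_subset_with_card_n[of r Z] assms by auto
  have "card (Z - B) = card Z - r" using B assms(1) by (simp add: card_Diff_subset finite_subset)
  then have "r \<le> card (Z - B)" using assms by simp
  then obtain C where C: "C \<subseteq> Z - B" "card C = r" using obtain_subset_with_card_n by metis
  show ?thesis using B C by blast
qed

lemma gen2:
  assumes fin: "finite N" and T: "T \<subseteq> N" and a: "a \<in> N" "a \<notin> T" and b: "b \<in> N" "b \<notin> T"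
    and ab: "a \<noteq> b" and tk: "card T < k" and nk: "2*k \<le> card N + card T"
  shows "\<exists>F1 F2. F1 \<subseteq> N \<and> F2 \<subseteq> N \<and> card F1 = k \<and> card F2 = k \<and> a \<in> F1 \<and> b \<in> F2
     \<and> T \<subseteq> F1 \<and> T \<subseteq> F2 \<and> F1 \<inter> F2 = T"
proof -
  define Z where "Z = N - T - {a,b}"
  define r where "r = k - card T - 1"
  have finT: "finite T" using fin T finite_subset by auto
  have c1: "card (N - T) = card N - card T" using T finT by (simp add: card_Diff_subset)
  have "card Z = card (N - T) - card {a,b}" unfolding Z_def
    using a b fin by (intro card_Diff_subset) auto
  then have cZ: "card Z = card N - card T - 2" using c1 ab by simp
  have r2: "2*r \<le> card Z" unfolding cZ r_def using tk nk by linarith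
  have fZ: "finite Z" unfolding Z_def using fin by simp
  obtain B C where BC: "B \<subseteq> Z" "C \<subseteq> Z" "B \<inter> C = {}" "card B = r" "card C = r"
    using two_subsets[OF fZ r2] by auto
  have fB: "finite B" "finite C" using BC fZ finite_subset by auto
  define F1 where "F1 = insert a (T \<union> B)"
  define F2 where "F2 = insert b (T \<union> C)"
  have aB: "a \<notin> B" "b \<notin> C" "a \<notin> C" "b \<notin> B" using BC unfolding Z_def by blast+
  have TB: "T \<inter> B = {}" "T \<inter> C = {}" using BC unfolding Z_def by blast+
  have "card (T \<union> B) = card T + card B" using TB fB finT by (simp add: card_Un_disjoint)
  moreover have "card F1 = Suc (card (T \<union> B))" unfolding F1_def
    using aB a fB finT by (simp add: card_insert_disjoint)
  ultimately have k1: "card F1 = k" using BC tk r_def by simp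
  have "card (T \<union> C) = card T + card C" using TB fB finT by (simp add: card_Un_disjoint)
  moreover have "card F2 = Suc (card (T \<union> C))" unfolding F2_def
    using aB b fB finT by (simp add: card_insert_disjoint)
  ultimately have k2: "card F2 = k" using BC tk r_def by simp
  have "F1 \<inter> F2 = T" unfolding F1_def F2_def using BC(3) aB a b ab TB by blast
  moreover have "F1 \<subseteq> N" "F2 \<subseteq> N" unfolding F1_def F2_def using BC a b T unfolding Z_def by blast+
  moreover have "T \<subseteq> F1" "T \<subseteq> F2" "a \<in> F1" "b \<in> F2" unfolding F1_def F2_def by blast+
  ultimately show ?thesis using k1 k2 by blast
qed

lemma inter_card:
  assumes "finite F1" "finite F2" "card F1 = k" "card F2 = k" "F1 \<noteq> F2"
  shows "card (F1 \<inter> F2) < k"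
proof (rule ccontr)
  assume "\<not> ?thesis"
  then have "card (F1 \<inter> F2) = card F1" using assms card_mono[of F1 "F1 \<inter> F2"] by auto
  then have "F1 \<inter> F2 = F1" using assms by (metis card_subset_eq inf_le1)
  then have "F1 \<subseteq> F2" by blast
  then have "F1 = F2" using assms card_subset_eq by metis
  then show False using assms by simp
qed

lemma two_outside:
  assumes "finite N" "T \<subseteq> N" "card T + 2 \<le> card N"
  shows "\<exists>a b. a \<in> N \<and> a \<notin> T \<and> b \<in> N \<and> b \<notin> T \<and> a \<noteq> b"
proof -
  have "card (N - T) = card N - card T" using assms by (simp add: card_Diff_subset finite_subset)
  then have "2 \<le> card (N - T)" using assms by simp
  then obtain P where "P \<subseteq> N - T" "card P = 2" using obtain_subset_with_card_n by metis
  then show ?thesis by (auto simp: card_2_iff)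
qed

lemma IS:
  assumes k2: "k \<ge> 2" and nk: "n > 2*k" and x: "x \<in> {1..n::nat}"
  shows "intersections {S \<in> k_subsets {1..n} k. x \<in> S} = {T. T \<subseteq> {1..n} \<and> card T \<le> k - 1 \<and> x \<in> T}"
proof
  show "intersections {S \<in> k_subsets {1..n} k. x \<in> S} \<subseteq> {T. T \<subseteq> {1..n} \<and> card T \<le> k - 1 \<and> x \<in> T}"
  proof
    fix T assume "T \<in> intersections {S \<in> k_subsets {1..n} k. x \<in> S}"
    then obtain F1 F2 where F: "F1 \<subseteq> {1..n}" "card F1 = k" "x \<in> F1" "F2 \<subseteq> {1..n}" "card F2 = k" "x \<in> F2"
      "F1 \<noteq> F2" "T = F1 \<inter> F2" unfolding intersections_def k_subsets_def by blast
    have "finite F1" "finite F2" using F(1,4) finite_subset by auto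
    then have "card T < k" using inter_card F by blast
    then show "T \<in> {T. T \<subseteq> {1..n} \<and> card T \<le> k - 1 \<and> x \<in> T}" using F by auto
  qed
next
  show "{T. T \<subseteq> {1..n} \<and> card T \<le> k - 1 \<and> x \<in> T} \<subseteq> intersections {S \<in> k_subsets {1..n} k. x \<in> S}"
  proof
    fix T assume "T \<in> {T. T \<subseteq> {1..n} \<and> card T \<le> k - 1 \<and> x \<in> T}"
    then have T: "T \<subseteq> {1..n}" "card T \<le> k - 1" "x \<in> T" by auto
    have "card T + 2 \<le> card {1..n}" using T k2 nk by simp
    then obtain a b where ab: "a \<in> {1..n}" "a \<notin> T" "b \<in> {1..n}" "b \<notin> T" "a \<noteq> b"
      using two_outside[OF _ T(1)] by blast
    have tk: "card T < k" "2*k \<le> card {1..n} + card T" using T k2 nk by auto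
    obtain F1 F2 where F: "F1 \<subseteq> {1..n}" "F2 \<subseteq> {1..n}" "card F1 = k" "card F2 = k" "a \<in> F1" "b \<in> F2"
     "T \<subseteq> F1" "T \<subseteq> F2" "F1 \<inter> F2 = T"
      using gen2[OF finite_atLeastAtMost T(1) ab tk] by blast
    have "F1 \<noteq> F2" using F ab by blast
    then show "T \<in> intersections {S \<in> k_subsets {1..n} k. x \<in> S}"
      unfolding intersections_def k_subsets_def using F T(3) by blast
  qed
qed

lemma IA:
  assumes k2: "k \<ge> 2" and nk: "n > 2*k"
  shows "intersections {A \<in> k_subsets {1..n} k. card (A \<inter> {1,2,3}) \<ge> 2}
    = {T. T \<subseteq> {1..n::nat} \<and> card T \<le> k - 1 \<and> T \<inter> {1,2,3} \<noteq> {}}"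
proof
  show "intersections {A \<in> k_subsets {1..n} k. card (A \<inter> {1,2,3}) \<ge> 2}
    \<subseteq> {T. T \<subseteq> {1..n::nat} \<and> card T \<le> k - 1 \<and> T \<inter> {1,2,3} \<noteq> {}}"
  proof
    fix T assume "T \<in> intersections {A \<in> k_subsets {1..n} k. card (A \<inter> {1,2,3}) \<ge> 2}"
    then obtain F1 F2 where F: "F1 \<subseteq> {1..n}" "card F1 = k" "card (F1 \<inter> {1,2,3}) \<ge> 2"
      "F2 \<subseteq> {1..n}" "card F2 = k" "card (F2 \<inter> {1,2,3}) \<ge> 2"
      "F1 \<noteq> F2" "T = F1 \<inter> F2" unfolding intersections_def k_subsets_def by blast
    have "finite F1" "finite F2" using F(1,4) finite_subset by auto
    then have "card T < k" using inter_card F by blast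
    moreover have "T \<inter> {1,2,3} \<noteq> {}"
    proof
      assume e: "T \<inter> {1,2,3} = {}"
      have "card ((F1 \<inter> {1,2,3}) \<union> (F2 \<inter> {1,2,3})) = card (F1 \<inter> {1,2,3}) + card (F2 \<inter> {1,2,3})"
        using e F(8) by (intro card_Un_disjoint) auto
      moreover have "card ((F1 \<inter> {1,2,3}) \<union> (F2 \<inter> {1,2,3})) \<le> card {1,2,3::nat}"
        by (intro card_mono) auto
      ultimately show False using F(3,6) by simp
    qed
    ultimately show "T \<in> {T. T \<subseteq> {1..n::nat} \<and> card T \<le> k - 1 \<and> T \<inter> {1,2,3} \<noteq> {}}" using F by auto
  qed
next
  show "{T. T \<subseteq> {1..n::nat} \<and> card T \<le> k - 1 \<and> T \<inter> {1,2,3} \<noteq> {}} \<subseteq>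
     intersections {A \<in> k_subsets {1..n} k. card (A \<inter> {1,2,3}) \<ge> 2}"
  proof
    fix T assume "T \<in> {T. T \<subseteq> {1..n::nat} \<and> card T \<le> k - 1 \<and> T \<inter> {1,2,3} \<noteq> {}}"
    then have T: "T \<subseteq> {1..n}" "card T \<le> k - 1" "T \<inter> {1,2,3} \<noteq> {}" by auto
    have ft: "finite T" using T(1) finite_subset by auto
    have tk: "card T < k" "2*k \<le> card {1..n} + card T" using T k2 nk by auto
    show "T \<in> intersections {A \<in> k_subsets {1..n} k. card (A \<inter> {1,2,3}) \<ge> 2}"
    proof (cases "card (T \<inter> {1,2,3}) \<ge> 2")
      case True
      have "card T + 2 \<le> card {1..n}" using T k2 nk by simp
      then obtain a b where ab: "a \<in> {1..n}" "a \<notin> T" "b \<in> {1..n}" "b \<notin> T" "a \<noteq> b"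
        using two_outside[OF _ T(1)] by blast
      then obtain F1 F2 where F: "F1 \<subseteq> {1..n}" "F2 \<subseteq> {1..n}" "card F1 = k" "card F2 = k" "a \<in> F1" "b \<in> F2"
       "T \<subseteq> F1" "T \<subseteq> F2" "F1 \<inter> F2 = T"
        using gen2[OF _ T(1) ab tk] by auto
      have "F1 \<noteq> F2" using F ab by blast
      moreover have s1: "T \<inter> {1,2,3} \<subseteq> F1 \<inter> {1,2,3}" "T \<inter> {1,2,3} \<subseteq> F2 \<inter> {1,2,3}" using F by blast+
      have "card (T \<inter> {1,2,3}) \<le> card (F1 \<inter> {1,2,3})" "card (T \<inter> {1,2,3}) \<le> card (F2 \<inter> {1,2,3})"
        by (rule card_mono[OF _ s1(1)], simp) (rule card_mono[OF _ s1(2)], simp)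
      then have "card (F1 \<inter> {1,2,3}) \<ge> 2" "card (F2 \<inter> {1,2,3}) \<ge> 2" using True by linarith+
      ultimately show ?thesis
        unfolding intersections_def k_subsets_def using F by blast
    next
      case False
      have "card (T \<inter> {1,2,3}) \<noteq> 0" using T(3) card_eq_0_iff[of "T \<inter> {1,2,3}"] by blast
      then have c1: "card (T \<inter> {1,2,3}) = 1" using False by linarith
      have "card ({1,2,3::nat} - T) = card {1,2,3::nat} - card ({1,2,3} \<inter> T)"
        by (simp add: card_Diff_subset_Int)
      then have "card ({1,2,3::nat} - T) = 2" using c1 by (simp add: Int_commute)
      then obtain a b where ab0: "{1,2,3} - T = {a,b}" "a \<noteq> b" by (auto simp: card_2_iff)
      have "{1,2,3} \<subseteq> {1..n}" using nk k2 by auto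
      then have ab: "a \<in> {1..n}" "a \<notin> T" "b \<in> {1..n}" "b \<notin> T" "a \<noteq> b" using ab0 by blast+
      then obtain F1 F2 where F: "F1 \<subseteq> {1..n}" "F2 \<subseteq> {1..n}" "card F1 = k" "card F2 = k" "a \<in> F1" "b \<in> F2"
       "T \<subseteq> F1" "T \<subseteq> F2" "F1 \<inter> F2 = T"
        using gen2[OF _ T(1) ab tk] by auto
      have "F1 \<noteq> F2" using F ab by blast
      have a3: "a \<in> {1,2,3}" "b \<in> {1,2,3}" using ab0 by blast+
      have "card (insert a (T \<inter> {1,2,3})) = 2" using c1 ab ft by simp
      moreover have "card (insert b (T \<inter> {1,2,3})) = 2" using c1 ab ft by simp
      moreover have "insert a (T \<inter> {1,2,3}) \<subseteq> F1 \<inter> {1,2,3}" "insert b (T \<inter> {1,2,3}) \<subseteq> F2 \<inter> {1,2,3}"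
        using F a3 by blast+
      ultimately have "card (F1 \<inter> {1,2,3}) \<ge> 2" "card (F2 \<inter> {1,2,3}) \<ge> 2"
        by (metis card_mono finite_Int finite.emptyI finite.insertI)+
      with \<open>F1 \<noteq> F2\<close> show ?thesis
        unfolding intersections_def k_subsets_def using F by blast
    qed
  qed
qed
lemma bounded_card:
  assumes "finite A"
  shows "card {T. T \<subseteq> A \<and> card T \<le> m} = (\<Sum>j\<le>m. card A choose j)"
proof -
  have e: "{T. T \<subseteq> A \<and> card T \<le> m} = (\<Union>j\<in>{..m}. {T. T \<subseteq> A \<and> card T = j})" by auto
  have "card (\<Union>j\<in>{..m}. {T. T \<subseteq> A \<and> card T = j}) = (\<Sum>j\<le>m. card {T. T \<subseteq> A \<and> card T = j})"
    using assms by (intro card_UN_disjoint) auto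
  also have "\<dots> = (\<Sum>j\<le>m. card A choose j)" using n_subsets[OF assms] by simp
  finally show ?thesis using e by simp
qed

lemma cardE:
  assumes x: "x \<in> {1..n::nat}" and m: "m \<ge> 1"
  shows "card {T. T \<subseteq> {1..n} \<and> card T \<le> m \<and> x \<in> T} = (\<Sum>j\<le>m-1. (n - 1) choose j)"
proof -
  let ?E = "{T. T \<subseteq> {1..n} \<and> card T \<le> m \<and> x \<in> T}"
  let ?G = "{T. T \<subseteq> {1..n} - {x} \<and> card T \<le> m - 1}"
  have inj: "inj_on (\<lambda>T. T - {x}) ?E"
    by (rule inj_onI) (metis (no_types, lifting) insert_Diff mem_Collect_eq)
  have "(\<lambda>T. T - {x}) ` ?E = ?G"
  proof
    show "(\<lambda>T. T - {x}) ` ?E \<subseteq> ?G"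
    proof
      fix S assume "S \<in> (\<lambda>T. T - {x}) ` ?E"
      then obtain T where T: "T \<in> ?E" "S = T - {x}" by blast
      have "finite T" using T finite_subset by auto
      then have "card S = card T - 1" using T by simp
      then show "S \<in> ?G" using T by auto
    qed
  next
    show "?G \<subseteq> (\<lambda>T. T - {x}) ` ?E"
    proof
      fix S assume S: "S \<in> ?G"
      have "finite S" using S finite_subset by auto
      moreover have "x \<notin> S" using S by blast
      ultimately have "card (insert x S) = card S + 1" by simp
      then have "insert x S \<in> ?E" using S x m by auto
      moreover have "S = insert x S - {x}" using S by auto
      ultimately show "S \<in> (\<lambda>T. T - {x}) ` ?E" by blast
    qed
  qed
  then have "card ?E = card ?G" using card_image[OF inj] by simp
  also have "\<dots> = (\<Sum>j\<le>m-1. card ({1..n} - {x}) choose j)" by (rule bounded_card) simp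
  also have "card ({1..n} - {x}) = n - 1" using x by simp
  finally show ?thesis .
qed
lemma card_filter_sum: "finite A \<Longrightarrow> card {a\<in>A. P a} = (\<Sum>a\<in>A. if P a then 1 else (0::nat))"
  using sum.inter_filter[of A "\<lambda>_. 1::nat" P] by simp

theorem mainTheorem3:
  fixes k n x :: nat
  assumes "k \<ge> 2" and "n > 2 * k" and "x \<in> {1..n}"
  shows "real (card (intersections {S \<in> k_subsets {1..n} k. x \<in> S}))
       < 2 / 3 * real (card (intersections {A \<in> k_subsets {1..n} k. card (A \<inter> {1,2,3}) \<ge> 2}))"
proof -
  define U where "U = {T. T \<subseteq> {1..n} \<and> card T \<le> k - 1 \<and> T \<inter> {1,2,3::nat} \<noteq> {}}"
  define e where "e = (\<Sum>j\<le>k-1-1. (n - 1) choose j)"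
  have fU: "finite U" unfolding U_def by (rule finite_subset[of _ "Pow {1..n}"]) auto
  have Ex: "card {T. T \<subseteq> {1..n} \<and> card T \<le> k - 1 \<and> x \<in> T} = e"
    unfolding e_def using cardE[of x n "k-1"] assms by simp
  have Ei: "card {T\<in>U. i\<in>T} = e" if i: "i \<in> {1,2,3}" for i :: nat
  proof -
    have "{T\<in>U. i\<in>T} = {T. T \<subseteq> {1..n} \<and> card T \<le> k-1 \<and> i \<in>T}" unfolding U_def using i by blast
    moreover have "i \<in> {1..n}" using i assms by auto
    ultimately show "card {T\<in>U. i\<in>T} = e" unfolding e_def using cardE[of i n "k-1"] assms by simp
  qed
  have "(\<Sum>i\<in>{1,2,3::nat}. card {T\<in>U. i\<in>T}) = (\<Sum>i\<in>{1,2,3::nat}. \<Sum>T\<in>U. if i\<in>T then 1 else (0::nat))"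
    using fU by (simp add: card_filter_sum)
  also have "\<dots> = (\<Sum>T\<in>U. \<Sum>i\<in>{1,2,3::nat}. if i\<in>T then 1 else (0::nat))" by (rule sum.swap)
  also have "\<dots> = (\<Sum>T\<in>U. card (T \<inter> {1,2,3}))"
  proof (rule sum.cong)
    fix T assume "T \<in> U"
    have "T \<inter> {1,2,3} = {i\<in>{1,2,3}. i \<in> T}" by blast
    then show "(\<Sum>i\<in>{1,2,3::nat}. if i\<in>T then 1 else (0::nat)) = card (T \<inter> {1,2,3})"
      by (simp only: card_filter_sum[of "{1,2,3::nat}"] finite.emptyI finite.insertI)
  qed simp
  finally have dc: "(\<Sum>i\<in>{1,2,3::nat}. card {T\<in>U. i\<in>T}) = (\<Sum>T\<in>U. card (T \<inter> {1,2,3}))" .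
  have "(\<Sum>i\<in>{1,2,3::nat}. card {T\<in>U. i\<in>T}) = (\<Sum>i\<in>{1,2,3::nat}. e)"
    by (rule sum.cong) (auto simp: Ei)
  then have s3: "3 * e = (\<Sum>T\<in>U. card (T \<inter> {1,2,3}))" using dc by simp
  define c where "c T = card (T \<inter> {1,2,3::nat})" for T
  have crange: "c T \<ge> 1 \<and> c T \<le> 3" if "T \<in> U" for T
  proof -
    have "T \<inter> {1,2,3} \<noteq> {}" using that unfolding U_def by blast
    then have "c T \<noteq> 0" unfolding c_def by (simp add: card_eq_0_iff)
    moreover have "c T \<le> card {1,2,3::nat}" unfolding c_def by (rule card_mono) auto
    ultimately show ?thesis by simp
  qed
  define U1 where "U1 = {T\<in>U. c T = 1}"
  define U3 where "U3 = {T\<in>U. c T = 3}"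
  have "(\<Sum>T\<in>U. c T) + card U1 = (\<Sum>T\<in>U. c T + (if c T = 1 then 1 else 0))"
    unfolding U1_def using fU by (simp add: card_filter_sum sum.distrib)
  also have "\<dots> = (\<Sum>T\<in>U. 2 + (if c T = 3 then 1 else 0))"
  proof (rule sum.cong)
    fix T assume "T \<in> U"
    then have "c T = 1 \<or> c T = 2 \<or> c T = 3" using crange by fastforce
    then show "c T + (if c T = 1 then 1 else 0) = 2 + (if c T = 3 then 1 else (0::nat))" by auto
  qed simp
  also have "\<dots> = (\<Sum>T\<in>U. 2) + (\<Sum>T\<in>U. if c T = 3 then 1 else 0)"
    by (rule sum.distrib)
  also have "\<dots> = 2 * card U + card U3"
    unfolding U3_def using fU by (simp add: card_filter_sum)
  finally have key: "3 * e + card U1 = 2 * card U + card U3" using s3 unfolding c_def by simp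
  have lt: "card U3 < card U1"
  proof -
    define f where "f T = T - {2,3::nat}" for T
    have sub3: "{1,2,3} \<subseteq> T" if "T \<in> U3" for T
    proof -
      have "finite T" proof -
        have "T \<subseteq> {1..n}" using that unfolding U3_def U_def by simp
        then show ?thesis by (rule finite_subset) simp
      qed
      have "card (T \<inter> {1,2,3::nat}) = card {1,2,3::nat}" using that unfolding U3_def c_def by simp
      then have "T \<inter> {1,2,3} = {1,2,3}" by (intro card_subset_eq) auto
      then show ?thesis by blast
    qed
    have inj: "inj_on f U3"
    proof (rule inj_onI)
      fix T T' assume "T \<in> U3" "T' \<in> U3" "f T = f T'"
      have "T = f T \<union> {2,3}" "T' = f T' \<union> {2,3}"
        using sub3[OF \<open>T \<in> U3\<close>] sub3[OF \<open>T' \<in> U3\<close>] unfolding f_def by auto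
      then show "T = T'" using \<open>f T = f T'\<close> by simp
    qed
    have cardf: "card (f T) < k - 1" if "T \<in> U3" for T
    proof -
      have fT: "finite T" proof -
        have "T \<subseteq> {1..n}" using that unfolding U3_def U_def by simp
        then show ?thesis by (rule finite_subset) simp
      qed
      have "card (f T) = card T - card {2,3::nat}" unfolding f_def
        using sub3[OF that] fT by (intro card_Diff_subset) auto
      moreover have "card {1,2,3::nat} \<le> card T" using sub3[OF that] fT by (intro card_mono) auto
      moreover have "card T \<le> k - 1" using that unfolding U3_def U_def by blast
      ultimately show ?thesis by simp
    qed
    have img: "f ` U3 \<subseteq> U1"
    proof
      fix S assume "S \<in> f ` U3"
      then obtain T where T: "T \<in> U3" "S = f T" by blast
      have "S \<inter> {1,2,3} = {1}" using sub3[OF T(1)] T(2) unfolding f_def by auto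
      moreover have "S \<subseteq> {1..n}" using T unfolding U3_def U_def f_def by blast
      moreover have "card S \<le> k - 1" using cardf[OF T(1)] T(2) by simp
      ultimately show "S \<in> U1" unfolding U1_def U_def c_def by (simp, blast)
    qed
    have "card ({1..n} - {1,2,3::nat}) = n - 3"
      using assms by (subst card_Diff_subset) auto
    then have "k - 2 \<le> card ({1..n} - {1,2,3::nat})" using assms by simp
    then obtain R where R: "R \<subseteq> {1..n} - {1,2,3}" "card R = k - 2" "finite R"
      using obtain_subset_with_card_n by metis
    define W where "W = insert 1 R"
    have "1 \<notin> R" using R by blast
    then have cW: "card W = k - 1" unfolding W_def using R assms by simp
    have "W \<inter> {1,2,3} = {1}" unfolding W_def using R by blast
    moreover have "W \<subseteq> {1..n}" unfolding W_def using R assms by auto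
    ultimately have WU: "W \<in> U1" unfolding U1_def U_def c_def using cW by (simp, blast)
    have "W \<notin> f ` U3"
    proof
      assume "W \<in> f ` U3"
      then obtain T where "T \<in> U3" "W = f T" by blast
      then show False using cardf[of T] cW by simp
    qed
    then have "f ` U3 \<subset> U1" using img WU by blast
    moreover have "finite U1" unfolding U1_def using fU by simp
    ultimately have "card (f ` U3) < card U1" by (rule psubset_card_mono[rotated])
    then show ?thesis using card_image[OF inj] by simp
  qed
  have A: "card (intersections {S \<in> k_subsets {1..n} k. x \<in> S}) = e"
    using IS[OF assms] Ex by simp
  have B: "card (intersections {A \<in> k_subsets {1..n} k. card (A \<inter> {1,2,3}) \<ge> 2}) = card U"
    using IA[OF assms(1,2)] unfolding U_def by simp
  have "3 * e < 2 * card U" using key lt by linarith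
  then have "3 * real e < 2 * real (card U)" by linarith
  then show ?thesis unfolding A B by simp
qed

end
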